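(* Let $(B,\lfloor\cdot,\cdot\rfloor,\|\cdot\|)$ be an SSDB space, $q(b):=\tfrac12\lfloor b,b\rfloor$, $g_0:=\tfrac12\|\cdot\|^2$. Then: (a) if $f$ is a BC--function on $B$ then ${\cal P}_q(f)-{\cal N}_q(g_0)=B$; (b) if $A$ is a $q$--positive subset of $B$ with $A-{\cal N}_q(g_0)=B$, then $A$ is maximally $q$--positive; (c) if $f$ is a BC--function on $B$ then ${\cal P}_q(f)$ is maximally $q$--positive and ${\cal P}_q(f^@)={\cal P}_q(f)$; (d) if $A$ is a $q$--positive subset of $B$, then $A$ is maximally $q$--positive if and only if $A-{\cal N}_q(g_0)=B$.
   Context: An SSDB space is a triple $(B,\lfloor\cdot,\cdot\rfloor,\|\cdot\|)$ where $B$ is a nonzero real vector space, $\lfloor\cdot,\cdot\rfloor$ a symmetric bilinear form on $B$, $(B,\|\cdot\|)$ a Banach space, and there is a linear isometry $\iota$ of $B$ onto its dual $B^*$ with $\langle b,\iota(c)\rangle=\lfloor b,c\rfloor$ for all $b,c$. For proper convex $f\colon B\to\,]{-}\infty,\infty]$, $f^@(c):=\sup_{b\in B}[\lfloor b,c\rfloor-f(b)]$. A BC--function is a proper convex $f$ with $f^@(b)\ge f(b)\ge q(b)$ for all $b$. ${\cal P}_q(h):=\{b\colon h(b)=q(b)\}$ for $h\ge q$, ${\cal N}_q(h):=\{b\colon h(b)=-q(b)\}$ for $h\ge -q$. $A$ is $q$--positive if $A\ne\emptyset$ and $q(b-c)\ge0$ for all $b,c\in A$; maximally $q$--positive if moreover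 it is not properly contained in another $q$--positive set. *)

theory Defs
  imports "HOL-Analysis.Analysis"
begin

text \<open>SSDB space: the Banach space is the real Banach space type 'b (norm = type norm);
  bf is the symmetric bilinear form; iota c = (\<lambda>b. bf b c) is a linear isometry of 'b
  onto its (continuous) dual.\<close>
definition SSDB :: "('b::banach \<Rightarrow> 'b \<Rightarrow> real) \<Rightarrow> bool" where
  "SSDB bf \<longleftrightarrow> (\<exists>b::'b. b \<noteq> 0) \<and> bilinear bf \<and> (\<forall>b c. bf b c = bf c b)
     \<and> (\<forall>c. bounded_linear (\<lambda>b. bf b c) \<and> onorm (\<lambda>b. bf b c) = norm c)
     \<and> (\<forall>\<phi>::'b \<Rightarrow> real. bounded_linear \<phi> \<longrightarrow> (\<exists>c. \<forall>b. \<phi> b = bf b c))"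

definition qf :: "('b::banach \<Rightarrow> 'b \<Rightarrow> real) \<Rightarrow> 'b \<Rightarrow> real" where
  "qf bf b = bf b b / 2"

definition g0 :: "'b::banach \<Rightarrow> ereal" where
  "g0 b = ereal (norm b ^ 2 / 2)"

definition proper_convex :: "('b::banach \<Rightarrow> ereal) \<Rightarrow> bool" where
  "proper_convex f \<longleftrightarrow> (\<forall>b. f b \<noteq> -\<infinity>) \<and> (\<exists>b. f b \<noteq> \<infinity>)
     \<and> convex {(b, r::real). f b \<le> ereal r}"

definition fconj :: "('b::banach \<Rightarrow> 'b \<Rightarrow> real) \<Rightarrow> ('b \<Rightarrow> ereal) \<Rightarrow> 'b \<Rightarrow> ereal" where
  "fconj bf f c = (SUP b. ereal (bf b c) - f b)"

definition BC_function :: "('b::banach \<Rightarrow> 'b \<Rightarrow> real) \<Rightarrow> ('b \<Rightarrow> ereal) \<Rightarrow> bool" where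
  "BC_function bf f \<longleftrightarrow> proper_convex f
     \<and> (\<forall>b. fconj bf f b \<ge> f b \<and> f b \<ge> ereal (qf bf b))"

definition Pq :: "('b::banach \<Rightarrow> 'b \<Rightarrow> real) \<Rightarrow> ('b \<Rightarrow> ereal) \<Rightarrow> 'b set" where
  "Pq bf h = {b. h b = ereal (qf bf b)}"

definition Nq :: "('b::banach \<Rightarrow> 'b \<Rightarrow> real) \<Rightarrow> ('b \<Rightarrow> ereal) \<Rightarrow> 'b set" where
  "Nq bf h = {b. h b = ereal (- qf bf b)}"

definition mdiff :: "'b::banach set \<Rightarrow> 'b set \<Rightarrow> 'b set" where
  "mdiff A C = {a - c | a c. a \<in> A \<and> c \<in> C}"

definition q_positive :: "('b::banach \<Rightarrow> 'b \<Rightarrow> real) \<Rightarrow> 'b set \<Rightarrow> bool" where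
  "q_positive bf A \<longleftrightarrow> A \<noteq> {} \<and> (\<forall>b\<in>A. \<forall>c\<in>A. qf bf (b - c) \<ge> 0)"

definition max_q_positive :: "('b::banach \<Rightarrow> 'b \<Rightarrow> real) \<Rightarrow> 'b set \<Rightarrow> bool" where
  "max_q_positive bf A \<longleftrightarrow> q_positive bf A
     \<and> (\<forall>A'. q_positive bf A' \<and> A \<subseteq> A' \<longrightarrow> A' = A)"

end

theory Submission
  imports Defs
begin

definition goodG :: "('a::real_vector \<Rightarrow> 'c \<Rightarrow> real) \<Rightarrow> 'c set \<Rightarrow> ('a \<times> real) set \<Rightarrow> bool" where
  "goodG F D G \<longleftrightarrow> (\<forall>p\<in>G. \<forall>q\<in>G. p + q \<in> G) \<and> (\<forall>p\<in>G. \<forall>t. t *\<^sub>R p \<in> G)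
     \<and> (\<forall>x a b. (x,a)\<in>G \<longrightarrow> (x,b)\<in>G \<longrightarrow> a = b) \<and> (\<forall>x a. (x,a)\<in>G \<longrightarrow> (\<forall>y\<in>D. a \<le> F x y))"

lemma HB_ext:
  fixes F :: "'a::real_vector \<Rightarrow> 'c::real_vector \<Rightarrow> real"
  assumes D: "convex D" "y0 \<in> D"
  and conv: "\<And>x1 x2 y1 y2 t. y1\<in>D \<Longrightarrow> y2\<in>D \<Longrightarrow> 0\<le>t \<Longrightarrow> t\<le>1 \<Longrightarrow>
     F (t *\<^sub>R x1 + (1-t) *\<^sub>R x2) (t *\<^sub>R y1 + (1-t) *\<^sub>R y2) \<le> t * F x1 y1 + (1-t) * F x2 y2"
  and G: "goodG F D M" "(0,0) \<in> M" and x0: "\<forall>a. (x0,a) \<notin> M"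
  shows "\<exists>M'. goodG F D M' \<and> M \<subseteq> M' \<and> M' \<noteq> M"
proof -
  have add: "p \<in> M \<Longrightarrow> q \<in> M \<Longrightarrow> p + q \<in> M" for p q using G unfolding goodG_def by blast
  have scl: "p \<in> M \<Longrightarrow> t *\<^sub>R p \<in> M" for p t using G unfolding goodG_def by blast
  have fnc: "(x,a)\<in>M \<Longrightarrow> (x,b)\<in>M \<Longrightarrow> a = b" for x a b using G unfolding goodG_def by blast
  have bnd: "(x,a)\<in>M \<Longrightarrow> y\<in>D \<Longrightarrow> a \<le> F x y" for x a y using G unfolding goodG_def by blast
  define L where "L = {(a - F (m - s *\<^sub>R x0) y) / s | m a s y. (m,a)\<in>M \<and> s > 0 \<and> y \<in> D}"
  have key: "(a' - F (m' - s *\<^sub>R x0) y') / s \<le> (F (m + t *\<^sub>R x0) y - a) / t"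
    if h: "(m,a)\<in>M" "(m',a')\<in>M" "s>0" "t>0" "y\<in>D" "y'\<in>D" for m a m' a' s t y y'
  proof -
    define l where "l = t/(s+t)"
    have l1: "1 - l = s/(s+t)" using h by (simp add: l_def field_simps)
    have l0: "0 \<le> l" "l \<le> 1" using h by (auto simp: l_def)
    have pt: "l *\<^sub>R (m' - s *\<^sub>R x0) + (1-l) *\<^sub>R (m + t *\<^sub>R x0) = l *\<^sub>R m' + (1-l) *\<^sub>R m"
      unfolding l1 using h by (simp add: l_def algebra_simps scaleR_add_right scaleR_diff_right)
    have mem: "(l *\<^sub>R m' + (1-l) *\<^sub>R m, l * a' + (1-l) * a) \<in> M"
      using add[OF scl[OF h(2), of l] scl[OF h(1), of "1-l"]] by simp
    have yD: "l *\<^sub>R y' + (1-l) *\<^sub>R y \<in> D" using D(1) h l0 by (simp add: convexD)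
    have "l * a' + (1-l) * a \<le> l * F (m' - s *\<^sub>R x0) y' + (1-l) * F (m + t *\<^sub>R x0) y"
      using bnd[OF mem yD] conv[OF h(6) h(5) l0, of "m' - s *\<^sub>R x0" "m + t *\<^sub>R x0"] pt by simp
    hence "(t * a' + s * a)/(s+t) \<le> (t * F (m' - s *\<^sub>R x0) y' + s * F (m + t *\<^sub>R x0) y)/(s+t)"
      unfolding l1 by (simp add: l_def add_divide_distrib)
    hence "t * a' + s * a \<le> t * F (m' - s *\<^sub>R x0) y' + s * F (m + t *\<^sub>R x0) y"
      using h by (simp add: divide_le_cancel)
    thus ?thesis using h by (simp add: field_simps)
  qed
  have Lne: "(0 - F (0 - 1 *\<^sub>R x0) y0)/1 \<in> L" unfolding L_def using G(2) D(2) by fastforce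
  have Lbdd: "bdd_above L" unfolding bdd_above_def L_def
    using key[OF G(2) _ _ zero_less_one D(2)] by (intro exI[of _ "(F (0 + 1 *\<^sub>R x0) y0 - 0)/1"]) auto
  define c where "c = Sup L"
  have cU: "c \<le> (F (m + t *\<^sub>R x0) y - a) / t" if "(m,a)\<in>M" "t>0" "y\<in>D" for m a t y
  proof -
    have "L \<noteq> {}" using Lne by blast
    then show ?thesis unfolding c_def using that by (intro cSup_least) (auto simp: L_def intro!: key)
  qed
  have cL: "(a - F (m - s *\<^sub>R x0) y) / s \<le> c" if "(m,a)\<in>M" "s>0" "y\<in>D" for m a s y
    unfolding c_def using Lbdd that by (intro cSup_upper) (auto simp: L_def)
  define M' where "M' = {(m + t *\<^sub>R x0, a + t * c) | m a t. (m,a)\<in>M}"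
  have "goodG F D M'"
    unfolding goodG_def
  proof (intro conjI ballI allI impI)
    fix p q assume "p \<in> M'" "q \<in> M'"
    then obtain m1 a1 t1 m2 a2 t2 where "p = (m1 + t1 *\<^sub>R x0, a1 + t1 * c)" "(m1,a1)\<in>M"
      "q = (m2 + t2 *\<^sub>R x0, a2 + t2 * c)" "(m2,a2)\<in>M" unfolding M'_def by blast
    hence "p + q = ((m1+m2) + (t1+t2) *\<^sub>R x0, (a1+a2) + (t1+t2)*c) \<and> (m1+m2,a1+a2) \<in> M"
      using add[of "(m1,a1)" "(m2,a2)"] by (simp add: algebra_simps)
    thus "p + q \<in> M'" unfolding M'_def by blast
  next
    fix p t assume "p \<in> M'"
    then obtain m1 a1 t1 where "p = (m1 + t1 *\<^sub>R x0, a1 + t1 * c)" "(m1,a1)\<in>M" unfolding M'_def by blast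
    hence "t *\<^sub>R p = (t *\<^sub>R m1 + (t*t1) *\<^sub>R x0, t*a1 + (t*t1)*c) \<and> (t *\<^sub>R m1, t*a1) \<in> M"
      using scl[of "(m1,a1)" t] by (simp add: algebra_simps)
    thus "t *\<^sub>R p \<in> M'" unfolding M'_def by blast
  next
    fix x a b assume "(x,a) \<in> M'" "(x,b) \<in> M'"
    then obtain m1 a1 t1 m2 a2 t2 where e: "x = m1 + t1 *\<^sub>R x0" "a = a1 + t1 * c" "(m1,a1)\<in>M"
      "x = m2 + t2 *\<^sub>R x0" "b = a2 + t2 * c" "(m2,a2)\<in>M" unfolding M'_def by blast
    have d: "(m1 - m2, a1 - a2) \<in> M" using add[OF e(3) scl[OF e(6), of "-1"]] by simp
    show "a = b"
    proof (cases "t1 = t2")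
      case True
      then have "m1 = m2" using e by simp
      then show ?thesis using fnc[OF e(3)] e True by simp
    next
      case False
      have "m1 - m2 = (t2 - t1) *\<^sub>R x0" using e by (simp add: algebra_simps)
      hence "x0 = (1/(t2-t1)) *\<^sub>R (m1 - m2)" using False by simp
      then have "(x0, (1/(t2-t1)) * (a1 - a2)) \<in> M" using scl[OF d, of "1/(t2-t1)"] by simp
      then show ?thesis using x0 by blast
    qed
  next
    fix x a y assume "(x,a) \<in> M'" "y \<in> D"
    then obtain m a1 t where e: "x = m + t *\<^sub>R x0" "a = a1 + t * c" "(m,a1)\<in>M" unfolding M'_def by blast
    consider "t > 0" | "t = 0" | "t < 0" by linarith
    then show "a \<le> F x y"
    proof cases
      case 1 then show ?thesis using cU[OF e(3) 1 \<open>y\<in>D\<close>] e by (simp add: field_simps)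
    next
      case 2 then show ?thesis using bnd[OF e(3) \<open>y\<in>D\<close>] e by simp
    next
      case 3
      have "-t > 0" using 3 by simp
      from cL[OF e(3) this \<open>y\<in>D\<close>] have "a1 - (-t) * c \<le> F (m - (-t) *\<^sub>R x0) y"
        using 3 by (simp add: field_simps)
      then show ?thesis using e by simp
    qed
  qed
  moreover have "M \<subseteq> M'" unfolding M'_def by (force intro: exI[of _ 0])
  moreover have "(x0, c) \<in> M'" unfolding M'_def using G(2) by (force intro: exI[of _ 1])
  ultimately show ?thesis using x0 by blast
qed

lemma HB_main:
  fixes F :: "'a::real_vector \<Rightarrow> 'c::real_vector \<Rightarrow> real"
  assumes D: "convex D" "y0 \<in> D"
  and conv: "\<And>x1 x2 y1 y2 t. y1\<in>D \<Longrightarrow> y2\<in>D \<Longrightarrow> 0\<le>t \<Longrightarrow> t\<le>1 \<Longrightarrow>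
     F (t *\<^sub>R x1 + (1-t) *\<^sub>R x2) (t *\<^sub>R y1 + (1-t) *\<^sub>R y2) \<le> t * F x1 y1 + (1-t) * F x2 y2"
  and nonneg: "\<And>y. y\<in>D \<Longrightarrow> 0 \<le> F 0 y"
  shows "\<exists>l. linear l \<and> (\<forall>x. \<forall>y\<in>D. l x \<le> F x y)"
proof -
  let ?A = "{G. goodG F D G}"
  have "\<exists>M\<in>?A. \<forall>X\<in>?A. M \<subseteq> X \<longrightarrow> X = M"
  proof (rule subset_Zorn')
    fix C assume C: "subset.chain ?A C"
    hence CA: "\<And>G. G \<in> C \<Longrightarrow> goodG F D G" and tot: "\<And>X Y. X\<in>C \<Longrightarrow> Y\<in>C \<Longrightarrow> X \<subseteq> Y \<or> Y \<subseteq> X"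
      by (auto simp: subset_chain_def)
    have two: "\<exists>G\<in>C. p \<in> G \<and> q \<in> G" if pq: "p \<in> \<Union>C" "q \<in> \<Union>C" for p q
    proof -
      obtain X Y where "X\<in>C" "Y\<in>C" "p\<in>X" "q\<in>Y" using pq by blast
      then show ?thesis using tot[of X Y] by blast
    qed
    show "\<Union>C \<in> ?A" unfolding goodG_def mem_Collect_eq
    proof (intro conjI ballI allI impI)
      fix p q assume "p \<in> \<Union>C" "q \<in> \<Union>C"
      then obtain G where "G\<in>C" "p\<in>G" "q\<in>G" using two by blast
      then show "p + q \<in> \<Union>C" using CA[of G] unfolding goodG_def by blast
    next
      fix p t assume "p \<in> \<Union>C"
      then obtain G where "G\<in>C" "p\<in>G" by blast
      then show "t *\<^sub>R p \<in> \<Union>C" using CA[of G] unfolding goodG_def by blast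
    next
      fix x a b assume "(x,a) \<in> \<Union>C" "(x,b) \<in> \<Union>C"
      then obtain G where "G\<in>C" "(x,a)\<in>G" "(x,b)\<in>G" using two by blast
      then show "a = b" using CA[of G] unfolding goodG_def by blast
    next
      fix x a y assume "(x,a) \<in> \<Union>C" "y \<in> D"
      then obtain G where "G\<in>C" "(x,a)\<in>G" by blast
      then show "a \<le> F x y" using CA[of G] \<open>y\<in>D\<close> unfolding goodG_def by blast
    qed
  qed
  then obtain M where M: "goodG F D M" and max: "\<And>X. goodG F D X \<Longrightarrow> M \<subseteq> X \<Longrightarrow> X = M" by blast
  have M0: "(0,0) \<in> M"
  proof (cases "M = {}")
    case True
    have "goodG F D {(0,0)}" unfolding goodG_def using nonneg by auto
    then have "{(0,0)} = M" using max True by blast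
    then show ?thesis by auto
  next
    case False
    then obtain p where "p \<in> M" by blast
    then have "0 *\<^sub>R p \<in> M" using M unfolding goodG_def by blast
    then show ?thesis by (simp add: zero_prod_def)
  qed
  have tot: "\<exists>a. (x,a) \<in> M" for x
  proof (rule ccontr)
    assume "\<not> ?thesis"
    then obtain M' where "goodG F D M'" "M \<subseteq> M'" "M' \<noteq> M"
      using HB_ext[OF D conv M M0, of x] by blast
    then show False using max by blast
  qed
  have fnc: "(x,a)\<in>M \<Longrightarrow> (x,b)\<in>M \<Longrightarrow> a = b" for x a b using M unfolding goodG_def by blast
  define l where "l x = (THE a. (x,a) \<in> M)" for x
  have lM: "(x, l x) \<in> M" for x
    unfolding l_def using tot[of x] fnc[of x] by (metis theI)
  have lin: "linear l"
  proof (rule linearI)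
    fix x y
    have "(x + y, l x + l y) \<in> M" using M lM[of x] lM[of y] unfolding goodG_def by force
    then show "l (x + y) = l x + l y" using fnc lM by blast
  next
    fix r x
    have "(r *\<^sub>R x, r * l x) \<in> M" using M lM[of x] unfolding goodG_def by force
    then show "l (r *\<^sub>R x) = r *\<^sub>R l x" using fnc[OF lM[of "r *\<^sub>R x"]] by simp
  qed
  have "\<forall>x. \<forall>y\<in>D. l x \<le> F x y" using M lM unfolding goodG_def by blast
  then show ?thesis using lin by blast
qed


lemma norm2_convex:
  fixes u v :: "'a::real_normed_vector"
  assumes "0 \<le> t" "t \<le> 1"
  shows "norm (t *\<^sub>R u + (1-t) *\<^sub>R v)^2 \<le> t * norm u^2 + (1-t) * norm v^2"
proof -
  have "norm (t *\<^sub>R u + (1-t) *\<^sub>R v) \<le> t * norm u + (1-t) * norm v"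
    using norm_triangle_ineq[of "t *\<^sub>R u" "(1-t) *\<^sub>R v"] assms by simp
  hence "norm (t *\<^sub>R u + (1-t) *\<^sub>R v)^2 \<le> (t * norm u + (1-t) * norm v)^2"
    by (simp add: power_mono)
  also have "\<dots> \<le> t * norm u^2 + (1-t) * norm v^2"
  proof -
    have "0 \<le> t * (1-t) * (norm u - norm v)^2" using assms by simp
    thus ?thesis by (simp add: power2_eq_square algebra_simps)
  qed
  finally show ?thesis .
qed

context
  fixes bf :: "'b::banach \<Rightarrow> 'b \<Rightarrow> real"
  assumes S: "SSDB bf"
begin

lemma bl: "bounded_linear (\<lambda>b. bf b c)" using S by (simp add: SSDB_def)
lemma bsym: "bf b c = bf c b" using S by (simp add: SSDB_def)
lemma bonorm: "onorm (\<lambda>b. bf b c) = norm c" using S by (simp add: SSDB_def)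
lemma brep: "bounded_linear \<phi> \<Longrightarrow> \<exists>c. \<forall>b. \<phi> b = bf b c" using S unfolding SSDB_def by blast
lemma bnontriv: "\<exists>b::'b. b \<noteq> 0" using S by (simp add: SSDB_def)

lemma bf_add1: "bf (x + y) c = bf x c + bf y c" using linear_add[OF bounded_linear.linear[OF bl]] .
lemma bf_scale1: "bf (t *\<^sub>R x) c = t * bf x c" using linear_scale[OF bounded_linear.linear[OF bl]] by simp
lemma bf_diff1: "bf (x - y) c = bf x c - bf y c" using linear_diff[OF bounded_linear.linear[OF bl]] .
lemma bf_minus1: "bf (- x) c = - bf x c" using linear_neg[OF bounded_linear.linear[OF bl]] .
lemma bf_zero1: "bf 0 c = 0" using linear_0[OF bounded_linear.linear[OF bl]] .
lemma bf_add2: "bf c (x + y) = bf c x + bf c y" using bf_add1 bsym by metis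
lemma bf_scale2: "bf c (t *\<^sub>R x) = t * bf c x" using bf_scale1 bsym by metis
lemma bf_diff2: "bf c (x - y) = bf c x - bf c y" using bf_diff1 bsym by metis
lemma bf_minus2: "bf c (- x) = - bf c x" using bf_minus1 bsym by metis
lemma bf_zero2: "bf c 0 = 0" using bf_zero1 bsym by metis

lemmas bf_simps = bf_add1 bf_scale1 bf_diff1 bf_minus1 bf_zero1 bf_add2 bf_scale2 bf_diff2 bf_minus2 bf_zero2

lemma bf_bound: "\<bar>bf b c\<bar> \<le> norm b * norm c"
  using onorm[OF bl[of c], of b] bonorm[of c] by (simp add: mult.commute)

lemma q_add: "qf bf (x + y) = qf bf x + bf x y + qf bf y"
  unfolding qf_def by (simp add: bf_simps bsym[of y x] field_simps)
lemma q_diff: "qf bf (x - y) = qf bf x - bf x y + qf bf y"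
  unfolding qf_def by (simp add: bf_simps bsym[of y x] field_simps)
lemma q_scale: "qf bf (t *\<^sub>R x) = t^2 * qf bf x"
  unfolding qf_def by (simp add: bf_simps power2_eq_square)
lemma q_minus: "qf bf (- x) = qf bf x"
  unfolding qf_def by (simp add: bf_simps)
lemma q_zero: "qf bf 0 = 0"
  unfolding qf_def by (simp add: bf_simps)
lemma q_lower: "- (norm x ^ 2 / 2) \<le> qf bf x"
  using bf_bound[of x x] unfolding qf_def by (simp add: power2_eq_square abs_le_iff)

lemma norming:
  assumes "0 < e"
  shows "\<exists>u. norm u = 1 \<and> norm c - e \<le> bf u c"
proof (rule ccontr)
  assume "\<not> ?thesis"
  hence H: "norm u = 1 \<Longrightarrow> bf u c < norm c - e" for u by force
  have H2: "\<bar>bf u c\<bar> < norm c - e" if "norm u = 1" for u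
    using H[OF that] H[of "-u"] that by (simp add: bf_minus1)
  obtain b :: 'b where "b \<noteq> 0" using bnontriv by blast
  hence "norm c - e > 0" using H2[of "(1/norm b) *\<^sub>R b"] by simp
  have "norm (bf x c) \<le> (norm c - e) * norm x" for x
  proof (cases "x = 0")
    case True then show ?thesis by (simp add: bf_zero1)
  next
    case False
    have "\<bar>bf ((1/norm x) *\<^sub>R x) c\<bar> < norm c - e" using H2 False by simp
    hence "\<bar>bf x c\<bar> / norm x < norm c - e" using False by (simp add: bf_scale1 abs_mult)
    then show ?thesis using False by (simp add: divide_less_eq mult.commute less_imp_le)
  qed
  hence "onorm (\<lambda>b. bf b c) \<le> norm c - e"
    using \<open>norm c - e > 0\<close> by (intro onorm_bound) auto
  then show False using bonorm assms by simp
qed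

lemma core1:
  fixes D :: "'b set" and \<phi> :: "'b \<Rightarrow> real"
  assumes D: "convex D" "y0 \<in> D"
  and cvx: "\<And>y1 y2 t. y1\<in>D \<Longrightarrow> y2\<in>D \<Longrightarrow> 0\<le>t \<Longrightarrow> t\<le>1 \<Longrightarrow>
      \<phi> (t *\<^sub>R y1 + (1-t) *\<^sub>R y2) \<le> t * \<phi> y1 + (1-t) * \<phi> y2"
  and ge: "\<And>y. y\<in>D \<Longrightarrow> qf bf y \<le> \<phi> y"
  shows "\<exists>c. \<forall>y\<in>D. bf (y - d) c + norm c ^ 2 / 2 \<le> \<phi> y - bf y d + qf bf d"
proof -
  define F where "F x y = \<phi> y - bf y d + qf bf d + norm (y - d - x)^2/2" for x y
  have conv: "F (t *\<^sub>R x1 + (1-t) *\<^sub>R x2) (t *\<^sub>R y1 + (1-t) *\<^sub>R y2) \<le> t * F x1 y1 + (1-t) * F x2 y2"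
    if h: "y1\<in>D" "y2\<in>D" "0\<le>t" "t\<le>1" for x1 x2 y1 y2 t
  proof -
    have e: "t *\<^sub>R y1 + (1-t) *\<^sub>R y2 - d - (t *\<^sub>R x1 + (1-t) *\<^sub>R x2)
       = t *\<^sub>R (y1 - d - x1) + (1-t) *\<^sub>R (y2 - d - x2)" by (simp add: algebra_simps)
    have "norm (t *\<^sub>R (y1 - d - x1) + (1-t) *\<^sub>R (y2 - d - x2))^2 \<le> t * norm (y1 - d - x1)^2 + (1-t) * norm (y2 - d - x2)^2"
      using norm2_convex h by blast
    hence "norm (t *\<^sub>R (y1 - d - x1) + (1-t) *\<^sub>R (y2 - d - x2))^2/2 \<le> (t * norm (y1 - d - x1)^2 + (1-t) * norm (y2 - d - x2)^2)/2"
      by (simp add: divide_right_mono)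
    moreover have "\<phi> (t *\<^sub>R y1 + (1-t) *\<^sub>R y2) \<le> t * \<phi> y1 + (1-t) * \<phi> y2" using cvx h by blast
    moreover have "F (t *\<^sub>R x1 + (1-t) *\<^sub>R x2) (t *\<^sub>R y1 + (1-t) *\<^sub>R y2) = \<phi> (t *\<^sub>R y1 + (1-t) *\<^sub>R y2)
       - (t * bf y1 d + (1-t) * bf y2 d) + qf bf d + norm (t *\<^sub>R (y1 - d - x1) + (1-t) *\<^sub>R (y2 - d - x2))^2/2"
      unfolding F_def e by (simp add: bf_simps)
    moreover have "t * F x1 y1 + (1-t) * F x2 y2 = t * \<phi> y1 + (1-t) * \<phi> y2 - (t * bf y1 d + (1-t) * bf y2 d)
       + qf bf d + (t * norm (y1 - d - x1)^2 + (1-t) * norm (y2 - d - x2)^2)/2"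
      unfolding F_def by (simp add: field_simps)
    ultimately show ?thesis by linarith
  qed
  have nonneg: "0 \<le> F 0 y" if "y \<in> D" for y
  proof -
    have "qf bf (y - d) + norm (y - d)^2/2 \<ge> 0" using q_lower[of "y - d"] by simp
    thus ?thesis using ge[OF that] unfolding F_def by (simp add: q_diff)
  qed
  obtain l where l: "linear l" "\<And>x y. y\<in>D \<Longrightarrow> l x \<le> F x y"
    using HB_main[of D y0 F, OF D conv nonneg] by blast
  define K where "K = \<phi> y0 - bf y0 d + qf bf d + (norm (y0 - d) + 1)^2/2"
  have lb: "l u \<le> K" if "norm u \<le> 1" for u
  proof -
    have "norm (y0 - d - u) \<le> norm (y0 - d) + 1" using norm_triangle_ineq4[of "y0 - d" u] that by simp
    hence a: "norm (y0 - d - u)^2 \<le> (norm (y0 - d) + 1)^2" by (simp add: power_mono)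
    have "l u \<le> F u y0" using l(2)[OF D(2)] .
    also have "\<dots> \<le> \<phi> y0 - bf y0 d + qf bf d + (norm (y0 - d) + 1)^2/2" using a unfolding F_def by simp
    finally show ?thesis unfolding K_def .
  qed
  have "bounded_linear l"
  proof (rule bounded_linear_intro[where K = K])
    show "l (x + y) = l x + l y" for x y using linear_add[OF l(1)] .
    show "l (r *\<^sub>R x) = r *\<^sub>R l x" for r x using linear_scale[OF l(1)] .
    show "norm (l x) \<le> norm x * K" for x
    proof (cases "x = 0")
      case True then show ?thesis using linear_0[OF l(1)] by simp
    next
      case False
      let ?u = "(1/norm x) *\<^sub>R x"
      have "l ?u \<le> K" "l (- ?u) \<le> K" using lb False by auto
      hence "\<bar>l ?u\<bar> \<le> K" using linear_neg[OF l(1), of ?u] by linarith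
      hence "\<bar>l x\<bar> / norm x \<le> K" using False linear_scale[OF l(1), of "1/norm x" x] by (simp add: abs_mult)
      then show ?thesis using False by (simp add: divide_le_eq mult.commute)
    qed
  qed
  then obtain c where c: "\<And>b. l b = bf b c" using brep by blast
  have main: "bf (y - d) c - bf z c \<le> \<phi> y - bf y d + qf bf d + norm z ^2/2" if "y\<in>D" for y z
    using l(2)[OF that, of "y - d - z"] unfolding c F_def by (simp add: bf_simps)
  show ?thesis
  proof (intro exI ballI)
    fix y assume y: "y \<in> D"
    show "bf (y - d) c + norm c ^ 2 / 2 \<le> \<phi> y - bf y d + qf bf d"
    proof (rule field_le_epsilon)
      fix e :: real assume e: "0 < e"
      obtain u where u: "norm u = 1" "norm c - e/(norm c + 1) \<le> bf u c"
        using norming[of "e/(norm c + 1)"] e by (smt (verit) divide_pos_pos norm_ge_zero)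
      have m: "bf (y - d) c - bf (- (norm c *\<^sub>R u)) c \<le> \<phi> y - bf y d + qf bf d + norm c ^2/2"
        using main[OF y, of "- (norm c *\<^sub>R u)"] u by simp
      have "norm c * (norm c - e/(norm c + 1)) \<le> norm c * bf u c" using u by (simp add: mult_left_mono)
      moreover have "norm c * (e/(norm c + 1)) \<le> e"
        using e by (simp add: divide_le_eq mult_left_mono) (smt (verit) mult_left_mono norm_ge_zero)
      ultimately show "bf (y - d) c + norm c ^ 2 / 2 \<le> \<phi> y - bf y d + qf bf d + e"
        using m by (simp add: bf_simps power2_eq_square right_diff_distrib)
    qed
  qed
qed

end

lemma pc_conv:
  assumes "proper_convex f" "f y1 = ereal r1" "f y2 = ereal r2" "0 \<le> t" "t \<le> 1"
  shows "f (t *\<^sub>R y1 + (1-t) *\<^sub>R y2) \<le> ereal (t*r1 + (1-t)*r2)"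
proof -
  let ?E = "{(b, r::real). f b \<le> ereal r}"
  have "convex ?E" using assms(1) unfolding proper_convex_def by blast
  moreover have "(y1,r1) \<in> ?E" "(y2,r2) \<in> ?E" using assms by auto
  ultimately have "t *\<^sub>R (y1,r1) + (1-t) *\<^sub>R (y2,r2) \<in> ?E"
    using assms(4,5) by (intro convexD) auto
  then show ?thesis by simp
qed

context
  fixes bf :: "'b::banach \<Rightarrow> 'b \<Rightarrow> real"
  assumes S: "SSDB bf"
begin

lemma partA_pt:
  assumes BC: "BC_function bf f"
  shows "\<exists>c. f (c + d) = ereal (qf bf (c + d)) \<and> g0 c = ereal (- qf bf c)"
proof -
  have pc: "proper_convex f" and fc: "\<And>b. f b \<le> fconj bf f b" and fq: "\<And>b. ereal (qf bf b) \<le> f b"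
    using BC unfolding BC_function_def by auto
  define D where "D = {y. f y \<noteq> \<infinity>}"
  define \<phi> where "\<phi> y = real_of_ereal (f y)" for y
  have fin: "f y = ereal (\<phi> y)" if "y \<in> D" for y
    using that pc unfolding D_def \<phi>_def proper_convex_def by (cases "f y") auto
  obtain y0 where y0: "y0 \<in> D" using pc unfolding D_def proper_convex_def by blast
  have cmb: "f (t *\<^sub>R y1 + (1-t) *\<^sub>R y2) \<le> ereal (t * \<phi> y1 + (1-t) * \<phi> y2)"
    if "y1\<in>D" "y2\<in>D" "0\<le>t" "t\<le>1" for y1 y2 t
    using pc_conv[OF pc fin[OF that(1)] fin[OF that(2)] that(3,4)] .
  have cD: "convex D"
  proof (rule convexI)
    fix x y :: 'b and u v :: real
    assume h: "x\<in>D" "y\<in>D" "0\<le>u" "0\<le>v" "u+v=1"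
    then have "v = 1 - u" by simp
    moreover have "f (u *\<^sub>R x + (1-u) *\<^sub>R y) \<noteq> \<infinity>" using cmb[OF h(1,2,3)] h by auto
    ultimately show "u *\<^sub>R x + v *\<^sub>R y \<in> D" unfolding D_def by simp
  qed
  have cvx: "\<phi> (t *\<^sub>R y1 + (1-t) *\<^sub>R y2) \<le> t * \<phi> y1 + (1-t) * \<phi> y2"
    if "y1\<in>D" "y2\<in>D" "0\<le>t" "t\<le>1" for y1 y2 t
  proof -
    have "t *\<^sub>R y1 + (1-t) *\<^sub>R y2 \<in> D" using cD that by (simp add: convexD)
    then show ?thesis using cmb[OF that] fin by fastforce
  qed
  have ge: "qf bf y \<le> \<phi> y" if "y \<in> D" for y using fq[of y] fin[OF that] by simp
  obtain c where c: "\<And>y. y\<in>D \<Longrightarrow> bf (y - d) c + norm c ^ 2 / 2 \<le> \<phi> y - bf y d + qf bf d"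
    using core1[OF S cD y0 cvx ge, of d] by blast
  define r where "r = bf d c + qf bf d - norm c ^ 2 / 2"
  have "fconj bf f (c + d) \<le> ereal r"
    unfolding fconj_def
  proof (rule SUP_least)
    fix y
    show "ereal (bf y (c + d)) - f y \<le> ereal r"
    proof (cases "y \<in> D")
      case True
      have "bf y (c + d) - \<phi> y \<le> r" using c[OF True] unfolding r_def
        by (simp add: bf_simps[OF S] bsym[OF S, of d c])
      then show ?thesis using fin[OF True] by simp
    next
      case False
      then show ?thesis unfolding D_def by simp
    qed
  qed
  hence fle: "f (c + d) \<le> ereal r" using fc[of "c + d"] by simp
  hence "ereal (qf bf (c + d)) \<le> ereal r" using order_trans[OF fq[of "c+d"]] by blast
  hence "qf bf (c + d) \<le> r" by simp
  hence qc: "qf bf c \<le> - (norm c ^ 2 / 2)" unfolding r_def q_add[OF S] by (simp add: bsym[OF S, of d c])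
  hence qc': "qf bf c = - (norm c ^ 2 / 2)" using q_lower[OF S, of c] by simp
  have "r = qf bf (c + d)" unfolding r_def q_add[OF S] qc' by (simp add: bsym[OF S, of d c])
  hence "f (c + d) = ereal (qf bf (c + d))" using fle fq[of "c+d"] by simp
  moreover have "g0 c = ereal (- qf bf c)" unfolding g0_def qc' by simp
  ultimately show ?thesis by blast
qed

lemma partA: "BC_function bf f \<Longrightarrow> mdiff (Pq bf f) (Nq bf g0) = UNIV"
proof -
  assume BC: "BC_function bf f"
  have "d \<in> mdiff (Pq bf f) (Nq bf g0)" for d
  proof -
    obtain c where "f (c + d) = ereal (qf bf (c + d))" "g0 c = ereal (- qf bf c)"
      using partA_pt[OF BC] by blast
    then show ?thesis unfolding mdiff_def Pq_def Nq_def
      by (intro CollectI exI[of _ "c + d"] exI[of _ c]) auto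
  qed
  then show ?thesis by blast
qed

lemma partB:
  assumes "q_positive bf A" "mdiff A (Nq bf g0) = UNIV"
  shows "max_q_positive bf A"
  unfolding max_q_positive_def
proof (intro conjI allI impI)
  show "q_positive bf A" by fact
  fix A' assume h: "q_positive bf A' \<and> A \<subseteq> A'"
  have "x \<in> A" if "x \<in> A'" for x
  proof -
    have "x \<in> mdiff A (Nq bf g0)" using assms(2) by simp
    then obtain a c where ac: "x = a - c" "a \<in> A" "g0 c = ereal (- qf bf c)"
      unfolding mdiff_def Nq_def by blast
    have nc: "norm c ^ 2 / 2 = - qf bf c" using ac(3) unfolding g0_def by simp
    have "0 \<le> qf bf (x - a)" using h that ac(2) unfolding q_positive_def by blast
    hence "0 \<le> qf bf c" using ac(1) q_minus[OF S, of c] by simp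
    hence "norm c ^ 2 = 0" using nc zero_le_power2[of "norm c"] by linarith
    hence "c = 0" by simp
    then show ?thesis using ac by simp
  qed
  then show "A' = A" using h by blast
qed

lemma Pq_qpos:
  assumes BC: "BC_function bf f" and b: "b \<in> Pq bf f" and c: "c \<in> Pq bf f"
  shows "0 \<le> qf bf (b - c)"
proof -
  have pc: "proper_convex f" and fq: "\<And>b. ereal (qf bf b) \<le> f b"
    using BC unfolding BC_function_def by auto
  have fb: "f b = ereal (qf bf b)" and fc: "f c = ereal (qf bf c)" using b c unfolding Pq_def by auto
  have "f ((1/2) *\<^sub>R b + (1 - 1/2) *\<^sub>R c) \<le> ereal ((1/2) * qf bf b + (1 - 1/2) * qf bf c)"
    using pc_conv[OF pc fb fc, of "1/2"] by simp
  hence "qf bf ((1/2) *\<^sub>R b + (1/2) *\<^sub>R c) \<le> (1/2) * qf bf b + (1/2) * qf bf c"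
    using fq[of "(1/2) *\<^sub>R b + (1/2) *\<^sub>R c"] by (simp del: scaleR_half_double) (smt (verit) ereal_less_eq(3) order_trans)
  hence "qf bf b / 4 + bf b c / 4 + qf bf c / 4 \<le> (1/2) * qf bf b + (1/2) * qf bf c"
    unfolding q_add[OF S] q_scale[OF S] by (simp add: bf_simps[OF S] power2_eq_square)
  then show ?thesis unfolding q_diff[OF S] by simp
qed

lemma tangent:
  assumes BC: "BC_function bf f" and b: "f b = ereal (qf bf b)" and y: "f y = ereal r"
  shows "bf y b - qf bf b \<le> r"
proof -
  have pc: "proper_convex f" and fq: "\<And>b. ereal (qf bf b) \<le> f b"
    using BC unfolding BC_function_def by auto
  let ?A = "bf y b - qf bf b" and ?Q = "qf bf (y - b)"
  have H: "?A + t * ?Q \<le> r" if t: "0 < t" "t \<le> 1" for t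
  proof -
    have "f (t *\<^sub>R y + (1-t) *\<^sub>R b) \<le> ereal (t * r + (1-t) * qf bf b)"
      using pc_conv[OF pc y b] t by simp
    hence "qf bf (t *\<^sub>R y + (1-t) *\<^sub>R b) \<le> t * r + (1-t) * qf bf b"
      using fq[of "t *\<^sub>R y + (1-t) *\<^sub>R b"] by (smt (verit) ereal_less_eq(3) order_trans)
    moreover have "t *\<^sub>R y + (1-t) *\<^sub>R b = b + t *\<^sub>R (y - b)" by (simp add: algebra_simps)
    ultimately have "qf bf b + t * bf b (y - b) + t^2 * ?Q \<le> t * r + (1-t) * qf bf b"
      by (simp add: q_add[OF S] q_scale[OF S] bf_simps[OF S])
    moreover have "t * r - t * (?A + t * ?Q) = (t * r + (1-t) * qf bf b) - (qf bf b + t * bf b (y - b) + t^2 * ?Q)"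
      by (simp add: bf_simps[OF S] bsym[OF S, of b y] qf_def field_simps power2_eq_square)
    ultimately have "t * (?A + t * ?Q) \<le> t * r" by linarith
    then show ?thesis using t by simp
  qed
  show ?thesis
  proof (rule field_le_epsilon)
    fix e :: real assume e: "0 < e"
    define t where "t = min 1 (e / (\<bar>?Q\<bar> + 1))"
    have t: "0 < t" "t \<le> 1" using e by (auto simp: t_def)
    have "t * \<bar>?Q\<bar> \<le> (e / (\<bar>?Q\<bar> + 1)) * \<bar>?Q\<bar>" unfolding t_def by (intro mult_right_mono) auto
    also have "\<dots> \<le> e" using e by (simp add: divide_le_eq mult_left_mono)
    finally have "- (t * ?Q) \<le> e" by (smt (verit) abs_mult_pos abs_ge_self t(1) mult_minus_right abs_le_iff)
    then show "?A \<le> r + e" using H[OF t] by simp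
  qed
qed

lemma Pq_conj: assumes BC: "BC_function bf f" shows "Pq bf (fconj bf f) = Pq bf f"
proof -
  have fc: "\<And>b. f b \<le> fconj bf f b" and fq: "\<And>b. ereal (qf bf b) \<le> f b"
    using BC unfolding BC_function_def by auto
  have "fconj bf f b = ereal (qf bf b)" if b: "f b = ereal (qf bf b)" for b
  proof (rule antisym)
    show "fconj bf f b \<le> ereal (qf bf b)" unfolding fconj_def
    proof (rule SUP_least)
      fix y show "ereal (bf y b) - f y \<le> ereal (qf bf b)"
      proof (cases "f y")
        case (real r)
        then show ?thesis using tangent[OF BC b real] by simp
      next
        case PInf then show ?thesis by simp
      next
        case MInf then show ?thesis using fq[of y] by simp
      qed
    qed
    show "ereal (qf bf b) \<le> fconj bf f b" using fc[of b] b by simp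
  qed
  moreover have "f b = ereal (qf bf b)" if "fconj bf f b = ereal (qf bf b)" for b
    using fc[of b] fq[of b] that by (metis antisym)
  ultimately show ?thesis unfolding Pq_def by blast
qed

lemma partD:
  assumes M: "max_q_positive bf A"
  shows "mdiff A (Nq bf g0) = UNIV"
proof -
  have qp: "q_positive bf A" and mx: "\<And>A'. q_positive bf A' \<Longrightarrow> A \<subseteq> A' \<Longrightarrow> A' = A"
    using M unfolding max_q_positive_def by auto
  have Ane: "A \<noteq> {}" and pos: "\<And>a b. a\<in>A \<Longrightarrow> b\<in>A \<Longrightarrow> 0 \<le> qf bf (a - b)" using qp unfolding q_positive_def by auto
  have ins: "z \<in> A" if "\<And>a. a\<in>A \<Longrightarrow> 0 \<le> qf bf (a - z)" for z
  proof -
    have "q_positive bf (insert z A)" unfolding q_positive_def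
    proof (intro conjI ballI)
      fix x y assume "x \<in> insert z A" "y \<in> insert z A"
      then show "0 \<le> qf bf (x - y)" using that pos q_minus[OF S, of "x - y"] q_zero[OF S]
        by (auto) (metis minus_diff_eq)
    qed simp
    then show ?thesis using mx[of "insert z A"] by blast
  qed
  define T where "T y = {bf a y - qf bf a | a. a \<in> A}" for y
  define D where "D = {y. bdd_above (T y)}"
  define \<phi> where "\<phi> y = Sup (T y)" for y
  have Tne: "T y \<noteq> {}" for y using Ane unfolding T_def by blast
  have inA: "a0 \<in> D \<and> \<phi> a0 = qf bf a0" if a0: "a0 \<in> A" for a0
  proof -
    have le: "x \<le> qf bf a0" if xT: "x \<in> T a0" for x
    proof -
      obtain a where "a\<in>A" "x = bf a a0 - qf bf a" using xT unfolding T_def by blast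
      then show ?thesis using pos[OF a0 \<open>a\<in>A\<close>] unfolding q_diff[OF S] by (simp add: bsym[OF S, of a a0])
    qed
    have mem: "qf bf a0 \<in> T a0" unfolding T_def using a0 by (auto simp: qf_def intro!: exI[of _ a0])
    have "bdd_above (T a0)" using le by (auto simp: bdd_above_def)
    moreover have "\<phi> a0 = qf bf a0" unfolding \<phi>_def using le mem
      by (intro antisym cSup_least cSup_upper) (auto simp: Tne bdd_above_def)
    ultimately show ?thesis unfolding D_def by blast
  qed
  obtain y0 where y0: "y0 \<in> A" using Ane by blast
  have cmb: "bdd_above (T (t *\<^sub>R y1 + (1-t) *\<^sub>R y2)) \<and> \<phi> (t *\<^sub>R y1 + (1-t) *\<^sub>R y2) \<le> t * \<phi> y1 + (1-t) * \<phi> y2"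
    if h: "y1\<in>D" "y2\<in>D" "0\<le>t" "t\<le>1" for y1 y2 t
  proof -
    have b: "x \<le> t * \<phi> y1 + (1-t) * \<phi> y2" if xT: "x \<in> T (t *\<^sub>R y1 + (1-t) *\<^sub>R y2)" for x
    proof -
      obtain a where a: "a\<in>A" "x = bf a (t *\<^sub>R y1 + (1-t) *\<^sub>R y2) - qf bf a" using xT unfolding T_def by blast
      have "x = t * (bf a y1 - qf bf a) + (1-t) * (bf a y2 - qf bf a)" using a by (simp add: bf_simps[OF S] algebra_simps)
      moreover have "bf a y1 - qf bf a \<le> \<phi> y1" "bf a y2 - qf bf a \<le> \<phi> y2" using h(1,2) a(1) unfolding D_def \<phi>_def
        by (auto intro!: cSup_upper simp: T_def)
      ultimately show ?thesis using h(3,4) by (smt (verit) mult_left_mono)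
    qed
    have "bdd_above (T (t *\<^sub>R y1 + (1-t) *\<^sub>R y2))" using b by (auto simp: bdd_above_def)
    moreover have "\<phi> (t *\<^sub>R y1 + (1-t) *\<^sub>R y2) \<le> t * \<phi> y1 + (1-t) * \<phi> y2" unfolding \<phi>_def
      using b Tne by (intro cSup_least) (auto simp: \<phi>_def)
    ultimately show ?thesis by blast
  qed
  have cD: "convex D"
  proof (rule convexI)
    fix x y :: 'b and u v :: real
    assume h: "x\<in>D" "y\<in>D" "0\<le>u" "0\<le>v" "u+v=1"
    then have "v = 1 - u" by simp
    moreover have "bdd_above (T (u *\<^sub>R x + (1-u) *\<^sub>R y))" using cmb[OF h(1,2,3)] h by auto
    ultimately show "u *\<^sub>R x + v *\<^sub>R y \<in> D" unfolding D_def by simp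
  qed
  have ge: "qf bf y \<le> \<phi> y" if y: "y \<in> D" for y
  proof (cases "y \<in> A")
    case True then show ?thesis using inA by simp
  next
    case False
    then have "\<not> (\<forall>a\<in>A. 0 \<le> qf bf (a - y))" using ins by blast
    then obtain a where a: "a \<in> A" "qf bf (a - y) < 0" by (auto simp: not_le)
    have "qf bf y < bf a y - qf bf a" using a(2) unfolding q_diff[OF S] by (simp add: bsym[OF S, of a y])
    also have "\<dots> \<le> \<phi> y" using y a(1) unfolding D_def \<phi>_def by (auto intro!: cSup_upper simp: T_def)
    finally show ?thesis by simp
  qed
  have "d \<in> mdiff A (Nq bf g0)" for d
  proof -
    obtain c where c: "\<And>y. y\<in>D \<Longrightarrow> bf (y - d) c + norm c ^ 2 / 2 \<le> \<phi> y - bf y d + qf bf d"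
      using core1[OF S cD _ _ ge, of y0 d] inA[OF y0] cmb by blast
    have key: "norm c ^ 2 / 2 + qf bf c \<le> qf bf (a - (d + c))" if a: "a \<in> A" for a
    proof -
      have "bf (a - d) c + norm c ^ 2 / 2 \<le> qf bf a - bf a d + qf bf d" using c inA[OF a] by fastforce
      then show ?thesis
        using q_diff[OF S, of "a - d" c] q_diff[OF S, of a d] by (simp add: algebra_simps)
    qed
    have "0 \<le> norm c ^ 2 / 2 + qf bf c" using q_lower[OF S, of c] by simp
    hence dcA: "d + c \<in> A" using key by (intro ins) (smt (verit))
    have "norm c ^ 2 / 2 + qf bf c \<le> 0" using key[OF dcA] q_zero[OF S] by simp
    hence "g0 c = ereal (- qf bf c)" unfolding g0_def using q_lower[OF S, of c] by simp
    then show ?thesis unfolding mdiff_def Nq_def using dcA by (intro CollectI exI[of _ "d + c"] exI[of _ c]) auto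
  qed
  then show ?thesis by blast
qed

end

theorem theorem4p4:
  fixes bf :: "'b::banach \<Rightarrow> 'b \<Rightarrow> real"
  assumes "SSDB bf"
  shows "(\<forall>f. BC_function bf f \<longrightarrow> mdiff (Pq bf f) (Nq bf g0) = UNIV)
    \<and> (\<forall>A. q_positive bf A \<and> mdiff A (Nq bf g0) = UNIV \<longrightarrow> max_q_positive bf A)
    \<and> (\<forall>f. BC_function bf f \<longrightarrow>
           max_q_positive bf (Pq bf f) \<and> Pq bf (fconj bf f) = Pq bf f)
    \<and> (\<forall>A. q_positive bf A \<longrightarrow> (max_q_positive bf A \<longleftrightarrow> mdiff A (Nq bf g0) = UNIV))"
proof (intro conjI allI impI)
  fix f assume BC: "BC_function bf f"
  show "mdiff (Pq bf f) (Nq bf g0) = UNIV" using partA[OF assms BC] .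
  have "Pq bf f \<noteq> {}" using partA[OF assms BC] unfolding mdiff_def by auto
  hence "q_positive bf (Pq bf f)" unfolding q_positive_def using Pq_qpos[OF assms BC] by blast
  then show "max_q_positive bf (Pq bf f)" using partB[OF assms _ partA[OF assms BC]] by blast
  show "Pq bf (fconj bf f) = Pq bf f" using Pq_conj[OF assms BC] .
next
  fix A assume "q_positive bf A \<and> mdiff A (Nq bf g0) = UNIV"
  then show "max_q_positive bf A" using partB[OF assms] by blast
next
  fix A assume "q_positive bf A"
  then show "max_q_positive bf A \<longleftrightarrow> mdiff A (Nq bf g0) = UNIV"
    using partB[OF assms] partD[OF assms] by blast
qed

end
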